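(* Let $\{h_m\}$ be a sequence of support functions of convex bodies in $\mathbb R^n$ that converges uniformly on $\mathbb S^{n-1}$ to a support function $h$. Then, for every $0<\alpha<1$, $h_m\to h$ in the $C^\alpha(\mathbb S^{n-1})$ norm.
   Context: The support function of a convex body $K$ is $h_K(x)=\max_{y\in K}\langle x,y\rangle$; $C^\alpha(\mathbb S^{n-1})$ is the space of $\alpha$-Hölder continuous functions on the sphere with the norm $\|f\|_{C^0}+\sup_{x\neq y}\frac{|f(x)-f(y)|}{|x-y|^\alpha}$. *)

theory Defs
  imports "HOL-Analysis.Analysis"
begin

definition convex_body :: "'a::euclidean_space set \<Rightarrow> bool" where
  "convex_body K \<longleftrightarrow> compact K \<and> convex K \<and> interior K \<noteq> {}"

definition support_fun :: "'a::euclidean_space set \<Rightarrow> 'a \<Rightarrow> real" where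
  "support_fun K x = (SUP y\<in>K. inner x y)"

definition holder_quotients :: "real \<Rightarrow> ('a::euclidean_space \<Rightarrow> real) \<Rightarrow> real set" where
  "holder_quotients \<alpha> f =
     {\<bar>f x - f y\<bar> / (norm (x - y) powr \<alpha>) | x y. x \<in> sphere 0 1 \<and> y \<in> sphere 0 1 \<and> x \<noteq> y}"

definition holder_on_sphere :: "real \<Rightarrow> ('a::euclidean_space \<Rightarrow> real) \<Rightarrow> bool" where
  "holder_on_sphere \<alpha> f \<longleftrightarrow> continuous_on (sphere 0 1) f \<and> bdd_above (holder_quotients \<alpha> f)"

definition holder_norm :: "real \<Rightarrow> ('a::euclidean_space \<Rightarrow> real) \<Rightarrow> real" where
  "holder_norm \<alpha> f = (SUP x\<in>sphere 0 1. \<bar>f x\<bar>) + Sup (holder_quotients \<alpha> f)"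

end

theory Submission
  imports Defs
begin

lemma supp_bounds:
  fixes K :: "'a::euclidean_space set"
  assumes ne: "K \<noteq> {}" and B: "\<forall>z\<in>K. norm z \<le> B"
  shows "\<bar>support_fun K x\<bar> \<le> B * norm x" and "support_fun K x - support_fun K y \<le> B * norm (x - y)"
    and "w \<in> K \<Longrightarrow> inner x w \<le> support_fun K x"
proof -
  have ib: "\<bar>inner v z\<bar> \<le> B * norm v" if "z \<in> K" for v z
  proof -
    have "\<bar>inner v z\<bar> \<le> norm v * norm z" by (rule Cauchy_Schwarz_ineq2)
    also have "\<dots> \<le> norm v * B" using B that by (simp add: mult_left_mono)
    finally show ?thesis by (simp add: mult.commute)
  qed
  have bdd: "bdd_above ((\<lambda>z. inner v z) ` K)" for v
    by (rule bdd_aboveI2[where M="B * norm v"]) (meson abs_le_D1 ib)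
  obtain z0 where z0: "z0 \<in> K" using ne by blast
  show "w \<in> K \<Longrightarrow> inner x w \<le> support_fun K x"
    unfolding support_fun_def by (rule cSUP_upper[OF _ bdd])
  have up: "support_fun K x \<le> B * norm x"
    unfolding support_fun_def by (intro cSUP_least[OF ne]) (meson abs_le_D1 ib)
  have lo: "inner x z0 \<le> support_fun K x"
    unfolding support_fun_def by (rule cSUP_upper[OF z0 bdd])
  have "- (B * norm x) \<le> inner x z0" using ib[OF z0, of x] by linarith
  with up lo show "\<bar>support_fun K x\<bar> \<le> B * norm x" by linarith
  have "support_fun K x \<le> support_fun K y + B * norm (x - y)"
    unfolding support_fun_def
  proof (rule cSUP_least[OF ne])
    fix z assume z: "z \<in> K"
    have "inner x z = inner y z + inner (x - y) z" by (simp add: inner_diff_left)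
    also have "\<dots> \<le> (SUP z\<in>K. inner y z) + B * norm (x - y)"
      using cSUP_upper[OF z bdd[of y]] ib[OF z, of "x - y"] by linarith
    finally show "inner x z \<le> (SUP z\<in>K. inner y z) + B * norm (x - y)" .
  qed
  then show "support_fun K x - support_fun K y \<le> B * norm (x - y)" by linarith
qed

lemma diff_bounds:
  fixes K L :: "'a::euclidean_space set"
  assumes "K \<noteq> {}" "L \<noteq> {}" "\<forall>z\<in>K. norm z \<le> B1" "\<forall>z\<in>L. norm z \<le> B2"
  shows "\<forall>x\<in>sphere 0 1. \<bar>support_fun K x - support_fun L x\<bar> \<le> B1 + B2"
    and "\<forall>x\<in>sphere 0 1. \<forall>y\<in>sphere 0 1.
      \<bar>(support_fun K x - support_fun L x) - (support_fun K y - support_fun L y)\<bar> \<le> (B1 + B2) * norm (x - y)"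
proof -
  note a = supp_bounds[OF assms(1,3)] and b = supp_bounds[OF assms(2,4)]
  show "\<forall>x\<in>sphere 0 1. \<bar>support_fun K x - support_fun L x\<bar> \<le> B1 + B2"
  proof
    fix x :: 'a assume "x \<in> sphere 0 1"
    then have "norm x = 1" by simp
    then have "\<bar>support_fun K x\<bar> \<le> B1" "\<bar>support_fun L x\<bar> \<le> B2"
      using a(1)[of x] b(1)[of x] by simp_all
    then show "\<bar>support_fun K x - support_fun L x\<bar> \<le> B1 + B2"
      by linarith
  qed
  show "\<forall>x\<in>sphere 0 1. \<forall>y\<in>sphere 0 1.
      \<bar>(support_fun K x - support_fun L x) - (support_fun K y - support_fun L y)\<bar> \<le> (B1 + B2) * norm (x - y)"
  proof (intro ballI)
    fix x y :: 'a
    have n: "norm (y - x) = norm (x - y)" by (rule norm_minus_commute)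
    show "\<bar>(support_fun K x - support_fun L x) - (support_fun K y - support_fun L y)\<bar> \<le> (B1 + B2) * norm (x - y)"
      using a(2)[of x y] a(2)[of y x] b(2)[of x y] b(2)[of y x] n by (simp add: algebra_simps abs_le_iff)
  qed
qed

lemma holder_gen:
  fixes f :: "'a::euclidean_space \<Rightarrow> real"
  assumes bnd: "\<forall>x\<in>sphere 0 1. \<bar>f x\<bar> \<le> E"
    and lip: "\<forall>x\<in>sphere 0 1. \<forall>y\<in>sphere 0 1. \<bar>f x - f y\<bar> \<le> C * norm (x - y)"
    and C: "0 \<le> C" and a0: "0 < \<alpha>" and a1: "\<alpha> < 1"
  shows "holder_on_sphere \<alpha> f \<and> 0 \<le> holder_norm \<alpha> f \<and>
    holder_norm \<alpha> f \<le> (SUP x\<in>sphere 0 1. \<bar>f x\<bar>) + (2 * (SUP x\<in>sphere 0 1. \<bar>f x\<bar>)) powr (1 - \<alpha>) * C powr \<alpha>"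
proof -
  let ?S = "sphere (0::'a) 1"
  obtain u :: 'a where "u \<in> Basis" using nonempty_Basis by blast
  then have u: "u \<in> ?S" by simp
  define e where "e = (SUP x\<in>?S. \<bar>f x\<bar>)"
  have bdd: "bdd_above ((\<lambda>x. \<bar>f x\<bar>) ` ?S)"
    by (rule bdd_aboveI2[where M=E]) (use bnd in force)
  have fe: "\<bar>f x\<bar> \<le> e" if "x \<in> ?S" for x
    unfolding e_def by (rule cSUP_upper[OF that bdd])
  have e0: "0 \<le> e" using fe[OF u] by linarith
  define M where "M = (2 * e) powr (1 - \<alpha>) * C powr \<alpha>"
  have M0: "0 \<le> M" unfolding M_def by simp
  have q: "0 \<le> q \<and> q \<le> M" if qin: "q \<in> holder_quotients \<alpha> f" for q
  proof -
    obtain x y where xy: "x \<in> ?S" "y \<in> ?S" "x \<noteq> y" and qd: "q = \<bar>f x - f y\<bar> / (norm (x - y) powr \<alpha>)"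
      using qin unfolding holder_quotients_def by force
    define d where "d = \<bar>f x - f y\<bar>"
    define r where "r = norm (x - y)"
    have r0: "0 < r" using xy unfolding r_def by simp
    have rp: "0 < r powr \<alpha>" using r0 by simp
    have d2: "d \<le> 2 * e" using fe[OF xy(1)] fe[OF xy(2)] unfolding d_def by linarith
    have dC: "d \<le> C * r" using lip xy unfolding d_def r_def by blast
    have d0: "0 \<le> d" unfolding d_def by simp
    have "d \<le> M * r powr \<alpha>"
    proof (cases "d = 0")
      case True then show ?thesis using M0 rp by simp
    next
      case False
      then have dp: "0 < d" using d0 by simp
      have "d = d powr (1 - \<alpha>) * d powr \<alpha>"
        using dp by (simp add: powr_add[symmetric])
      also have "\<dots> \<le> (2 * e) powr (1 - \<alpha>) * (C * r) powr \<alpha>"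
        by (rule mult_mono) (use d0 d2 dC a1 a0 in \<open>auto intro: powr_mono2\<close>)
      also have "\<dots> = M * r powr \<alpha>"
        unfolding M_def using C r0 by (simp add: powr_mult)
      finally show ?thesis .
    qed
    then have "q \<le> M" unfolding qd using rp by (simp add: d_def r_def pos_divide_le_eq)
    moreover have "0 \<le> q" unfolding qd by simp
    ultimately show ?thesis by simp
  qed
  have ne: "holder_quotients \<alpha> f \<noteq> {}"
  proof -
    have "u \<noteq> -u"
    proof
      assume "u = -u"
      then have "u + u = 0" by (metis add.right_inverse)
      then have "(2::real) *\<^sub>R u = 0" by (simp add: scaleR_2)
      then have "u = 0" by simp
      then show False using u by simp
    qed
    moreover have "-u \<in> ?S" using u by simp
    ultimately show ?thesis unfolding holder_quotients_def using u by blast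
  qed
  have bddq: "bdd_above (holder_quotients \<alpha> f)"
    using q by (intro bdd_aboveI[where M=M]) blast
  have cont: "continuous_on ?S f"
  proof (rule lipschitz_on_continuous_on)
    show "C-lipschitz_on ?S f"
      using lip C by (intro lipschitz_onI) (auto simp: dist_norm)
  qed
  obtain q0 where q0: "q0 \<in> holder_quotients \<alpha> f" using ne by blast
  have s0: "0 \<le> Sup (holder_quotients \<alpha> f)"
    using q[OF q0] cSup_upper[OF q0 bddq] by linarith
  have sM: "Sup (holder_quotients \<alpha> f) \<le> M"
    using q ne by (intro cSup_least) auto
  show ?thesis
    unfolding holder_on_sphere_def holder_norm_def using cont bddq s0 sM e0
    by (simp add: e_def[symmetric] M_def)
qed

theorem lemma5p7:
  fixes K :: "nat \<Rightarrow> 'a::euclidean_space set" and L :: "'a set" and \<alpha> :: real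
  assumes "\<And>m. convex_body (K m)"
    and "convex_body L"
    and "uniform_limit (sphere 0 1) (\<lambda>m. support_fun (K m)) (support_fun L) sequentially"
    and "0 < \<alpha>" and "\<alpha> < 1"
  shows "(\<forall>m. holder_on_sphere \<alpha> (\<lambda>x. support_fun (K m) x - support_fun L x))
    \<and> (\<lambda>m. holder_norm \<alpha> (\<lambda>x. support_fun (K m) x - support_fun L x)) \<longlonglongrightarrow> 0"
proof -
  let ?S = "sphere (0::'a) 1"
  define e where "e m = (SUP x\<in>?S. \<bar>support_fun (K m) x - support_fun L x\<bar>)" for m
  have Kne: "K m \<noteq> {}" for m using assms(1)[of m] unfolding convex_body_def by (metis interior_empty)
  have Lne: "L \<noteq> {}" using assms(2) unfolding convex_body_def by (metis interior_empty)
  obtain BL where BL: "BL > 0" "\<forall>z\<in>L. norm z \<le> BL"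
    using assms(2) unfolding convex_body_def by (metis compact_imp_bounded bounded_pos)
  have Kb: "\<exists>B>0. \<forall>z\<in>K m. norm z \<le> B" for m
    using assms(1)[of m] unfolding convex_body_def by (metis compact_imp_bounded bounded_pos)
  have G: "holder_on_sphere \<alpha> (\<lambda>x. support_fun (K m) x - support_fun L x) \<and>
      0 \<le> holder_norm \<alpha> (\<lambda>x. support_fun (K m) x - support_fun L x) \<and>
      holder_norm \<alpha> (\<lambda>x. support_fun (K m) x - support_fun L x) \<le> e m + (2 * e m) powr (1 - \<alpha>) * (B + BL) powr \<alpha>"
    if "B \<ge> 0" "\<forall>z\<in>K m. norm z \<le> B" for m B
    unfolding e_def
    by (rule holder_gen[OF diff_bounds(1)[OF Kne Lne that(2) BL(2)] diff_bounds(2)[OF Kne Lne that(2) BL(2)]])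
       (use that BL assms(4,5) in auto)
  have part1: "\<forall>m. holder_on_sphere \<alpha> (\<lambda>x. support_fun (K m) x - support_fun L x)"
  proof
    fix m obtain B where "B > 0" "\<forall>z\<in>K m. norm z \<le> B" using Kb by blast
    then show "holder_on_sphere \<alpha> (\<lambda>x. support_fun (K m) x - support_fun L x)" using G[of B m] by (simp add: less_imp_le)
  qed
  have nn: "0 \<le> holder_norm \<alpha> (\<lambda>x. support_fun (K m) x - support_fun L x)" for m
  proof -
    obtain B where "B > 0" "\<forall>z\<in>K m. norm z \<le> B" using Kb by blast
    then show ?thesis using G[of B m] by (simp add: less_imp_le)
  qed
  obtain u :: 'a where "u \<in> Basis" using nonempty_Basis by blast
  then have u: "u \<in> ?S" by simp
  have e0: "0 \<le> e m" for m
  proof -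
    obtain B where B: "B > 0" "\<forall>z\<in>K m. norm z \<le> B" using Kb by blast
    have "bdd_above ((\<lambda>x. \<bar>support_fun (K m) x - support_fun L x\<bar>) ` ?S)"
      by (rule bdd_aboveI2) (use diff_bounds(1)[OF Kne Lne B(2) BL(2)] in blast)
    from cSUP_upper[OF u this] show ?thesis unfolding e_def by linarith
  qed
  have ul: "\<forall>\<epsilon>>0. \<forall>\<^sub>F m in sequentially. \<forall>x\<in>?S. dist (support_fun (K m) x) (support_fun L x) < \<epsilon>"
    using assms(3) unfolding uniform_limit_iff by blast
  have elim: "e \<longlonglongrightarrow> 0"
    unfolding tendsto_iff
  proof (intro allI impI)
    fix \<epsilon> :: real assume "\<epsilon> > 0"
    then have "\<epsilon> / 2 > 0" by simp
    from ul[rule_format, OF this] show "\<forall>\<^sub>F m in sequentially. dist (e m) 0 < \<epsilon>"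
    proof (rule eventually_mono)
      fix m assume H: "\<forall>x\<in>?S. dist (support_fun (K m) x) (support_fun L x) < \<epsilon> / 2"
      have "e m \<le> \<epsilon> / 2" unfolding e_def
        using H u by (intro cSUP_least) (auto simp: dist_real_def less_imp_le)
      then show "dist (e m) 0 < \<epsilon>" using e0[of m] \<open>\<epsilon> > 0\<close> by simp
    qed
  qed
  have ev: "\<forall>\<^sub>F m in sequentially. \<forall>z\<in>K m. norm z \<le> BL + 1"
    using ul[rule_format, OF zero_less_one]
  proof (rule eventually_mono)
    fix m assume H: "\<forall>x\<in>?S. dist (support_fun (K m) x) (support_fun L x) < 1"
    obtain B where B: "B > 0" "\<forall>z\<in>K m. norm z \<le> B" using Kb by blast
    show "\<forall>z\<in>K m. norm z \<le> BL + 1"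
    proof
      fix z assume z: "z \<in> K m"
      show "norm z \<le> BL + 1"
      proof (cases "z = 0")
        case True then show ?thesis using BL by simp
      next
        case False
        define w where "w = (1 / norm z) *\<^sub>R z"
        have w: "w \<in> ?S" using False unfolding w_def by simp
        have i: "inner w z = norm z" using False unfolding w_def
          by (simp add: power2_norm_eq_inner[symmetric] power2_eq_square)
        have 1: "norm z \<le> support_fun (K m) w" using supp_bounds(3)[OF Kne B(2) z, of w] i by simp
        have 2: "support_fun L w \<le> BL" using supp_bounds(1)[OF Lne BL(2), of w] w by simp
        have 3: "support_fun (K m) w - support_fun L w < 1" using H w unfolding dist_real_def by (meson abs_less_iff)
        show ?thesis using 1 2 3 by linarith
      qed
    qed
  qed
  have part2: "(\<lambda>m. holder_norm \<alpha> (\<lambda>x. support_fun (K m) x - support_fun L x)) \<longlonglongrightarrow> 0"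
  proof (rule tendsto_sandwich[where f="\<lambda>_. 0" and h="\<lambda>m. e m + (2 * e m) powr (1 - \<alpha>) * (BL + 1 + BL) powr \<alpha>"])
    show "\<forall>\<^sub>F m in sequentially. 0 \<le> holder_norm \<alpha> (\<lambda>x. support_fun (K m) x - support_fun L x)"
      using nn by simp
    show "\<forall>\<^sub>F m in sequentially. holder_norm \<alpha> (\<lambda>x. support_fun (K m) x - support_fun L x)
        \<le> e m + (2 * e m) powr (1 - \<alpha>) * (BL + 1 + BL) powr \<alpha>"
    proof (rule eventually_mono[OF ev])
      fix m assume "\<forall>z\<in>K m. norm z \<le> BL + 1"
      with G[of "BL + 1" m] BL(1) show "holder_norm \<alpha> (\<lambda>x. support_fun (K m) x - support_fun L x)
        \<le> e m + (2 * e m) powr (1 - \<alpha>) * (BL + 1 + BL) powr \<alpha>" by simp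
    qed
    show "((\<lambda>_. 0::real) \<longlongrightarrow> 0) sequentially" by simp
    have "((\<lambda>m. (2 * e m) powr (1 - \<alpha>)) \<longlongrightarrow> 0) sequentially"
      by (rule tendsto_zero_powrI[where b="1 - \<alpha>"])
         (use elim tendsto_mult_right_zero[OF elim, of 2] e0 assms(5) in auto)
    from tendsto_add[OF elim tendsto_mult_left_zero[OF this]]
    show "((\<lambda>m. e m + (2 * e m) powr (1 - \<alpha>) * (BL + 1 + BL) powr \<alpha>) \<longlongrightarrow> 0) sequentially"
      by simp
  qed
  show ?thesis using part1 part2 by blast
qed

end
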